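(* Let $\Sigma=\{\sigma,\sigma'\}$. There is a Pavlovian population protocol computing the predicate $[x.\sigma\ge x.\sigma']$. Explicitly: $Q=\{\sigma,\sigma',Y,N\}$, $\iota$ the inclusion, $\omega(\sigma)=\omega(Y)=1$, $\omega(\sigma')=\omega(N)=0$, with rules $NY\to YY$, $YN\to YY$, $N\sigma\to Y\sigma$, $\sigma N\to\sigma Y$, $Y\sigma'\to N\sigma'$, $\sigma'Y\to\sigma'N$, $\sigma\sigma'\to NY$, $\sigma'\sigma\to YN$, and $q_1q_2\to q_1q_2$ for all other pairs; this is the protocol associated to the payoff matrix with rows (player) and columns (opponent) ordered $N,Y,\sigma,\sigma'$: row $N$: $(1,-1,-1,1)$; row $Y$: $(0,1,1,-1)$; row $\sigma$: $(0,0,0,-1)$; row $\sigma'$: $(0,0,-1,0)$.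
   Context: A population protocol is a tuple $(Q,\Sigma,\iota,\omega,\delta)$ where $Q$ is a finite set of states, $\Sigma$ a finite input alphabet, $\iota:\Sigma\to Q$, $\omega:Q\to\{0,1\}$, and $\delta\subseteq Q^4$ the transition relation; we write $q_1q_2\to q_1'q_2'$ for $(q_1,q_2,q_1',q_2')\in\delta$. Computations take place among $n\ge 2$ agents. A configuration is a multiset of $n$ elements of $Q$. An input is a multiset $x$ of $n\ge 2$ elements of $\Sigma$ (equivalently an element of $\mathbb N^{\Sigma}$ with total mass $n$; $x.\sigma$ denotes the multiplicity of $\sigma$ in $x$), and its initial configuration is the multiset $\iota(x)$. We write $C\to C'$ if $C'$ is obtained from $C$ by choosing two of its elements (two distinct agents) in states $q_1,q_2$ and replacing them by $q_1',q_2'$ for some $(q_1,q_2,q_1',q_2')\in\delta$. An execution is an infinite sequence $C_0,C_1,\dots$ with $C_0$ an initial configuration and $C_i\to C_{i+1}$ for all $i$. An execution is fair if for every configuration $C$ occurring infinitely often and every $C'$ with $C\to C'$, $C'$ also occurs infinitely often. A protocol computes a predicate $p:\mathbb N^\Sigma\to\{0,1\}$ if for every input $x$ and every fair execution from $\iota(x)$, there is a time after which every agent's output $\omega(q)$ equals $p(x)$. A symmetric game on $Q$ is a real matrix $M=(M_{q,r})_{q,r\in Q}$ ($M_{q,r}$ = payoff of playing $q$ against $r$). For $q',y\in Q$, $BR_{\neq q'}(y)$ is the set of $x\in Q\setminus\{q'\}$ with $M_{z,y}\le M_{x,y}$ for all $z\in Q\setminus\{q'\}$. The transition relation associated to $M$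 consists of exactly those $(q_1,q_2,q_1',q_2')$ with: $q_1'=q_1$ if $M_{q_1,q_2}\ge0$, $q_1'\in BR_{\neq q_1}(q_2)$ if $M_{q_1,q_2}<0$; $q_2'=q_2$ if $M_{q_2,q_1}\ge0$, $q_2'\in BR_{\neq q_2}(q_1)$ if $M_{q_2,q_1}<0$. A population protocol is Pavlovian if $\delta$ equals the transition relation associated to some real matrix indexed by $Q\times Q$. *)

theory Defs
  imports Complex_Main "HOL-Library.Multiset"
begin

text \<open>Population protocols. The state set Q is the (finite) universe of the type 'q,
  the input alphabet is the universe of the type 's. Outputs are booleans (1 = True).\<close>

record ('q, 's) protocol =
  inp :: "'s \<Rightarrow> 'q"
  out :: "'q \<Rightarrow> bool"
  trans :: "('q \<times> 'q \<times> 'q \<times> 'q) set"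

definition step :: "('q, 's) protocol \<Rightarrow> 'q multiset \<Rightarrow> 'q multiset \<Rightarrow> bool" where
  "step P C C' \<longleftrightarrow> (\<exists>q1 q2 q1' q2'. (q1, q2, q1', q2') \<in> trans P \<and>
      {#q1, q2#} \<subseteq># C \<and> C' = C - {#q1, q2#} + {#q1', q2'#})"

definition initial_config :: "('q, 's) protocol \<Rightarrow> 's multiset \<Rightarrow> 'q multiset" where
  "initial_config P x = image_mset (inp P) x"

definition execution :: "('q, 's) protocol \<Rightarrow> 's multiset \<Rightarrow> (nat \<Rightarrow> 'q multiset) \<Rightarrow> bool" where
  "execution P x E \<longleftrightarrow> E 0 = initial_config P x \<and> (\<forall>i. step P (E i) (E (Suc i)))"

definition fair :: "('q, 's) protocol \<Rightarrow> (nat \<Rightarrow> 'q multiset) \<Rightarrow> bool" where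
  "fair P E \<longleftrightarrow> (\<forall>C C'. (\<exists>\<^sub>\<infinity>i. E i = C) \<longrightarrow> step P C C' \<longrightarrow> (\<exists>\<^sub>\<infinity>i. E i = C'))"

definition computes :: "('q, 's) protocol \<Rightarrow> ('s multiset \<Rightarrow> bool) \<Rightarrow> bool" where
  "computes P p \<longleftrightarrow> (\<forall>x E. size x \<ge> 2 \<longrightarrow> execution P x E \<longrightarrow> fair P E \<longrightarrow>
      (\<exists>T. \<forall>t\<ge>T. \<forall>q\<in>#E t. out P q = p x))"

definition BR_neq :: "('q \<Rightarrow> 'q \<Rightarrow> real) \<Rightarrow> 'q \<Rightarrow> 'q \<Rightarrow> 'q set" where
  "BR_neq M q' y = {x. x \<noteq> q' \<and> (\<forall>z. z \<noteq> q' \<longrightarrow> M z y \<le> M x y)}"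

definition game_trans :: "('q \<Rightarrow> 'q \<Rightarrow> real) \<Rightarrow> ('q \<times> 'q \<times> 'q \<times> 'q) set" where
  "game_trans M = {(q1, q2, q1', q2').
      (if M q1 q2 \<ge> 0 then q1' = q1 else q1' \<in> BR_neq M q1 q2) \<and>
      (if M q2 q1 \<ge> 0 then q2' = q2 else q2' \<in> BR_neq M q2 q1)}"

definition pavlovian :: "('q, 's) protocol \<Rightarrow> bool" where
  "pavlovian P \<longleftrightarrow> (\<exists>M. trans P = game_trans M)"

datatype sym = Sig | Sig'
datatype st = N | Y | In sym

definition maj_rules :: "(st \<times> st \<times> st \<times> st) set" where
  "maj_rules = {(N, Y, Y, Y), (Y, N, Y, Y), (N, In Sig, Y, In Sig), (In Sig, N, In Sig, Y),
     (Y, In Sig', N, In Sig'), (In Sig', Y, In Sig', N),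
     (In Sig, In Sig', N, Y), (In Sig', In Sig, Y, N)}"

definition maj_trans :: "(st \<times> st \<times> st \<times> st) set" where
  "maj_trans = maj_rules \<union>
     {(q1, q2, q1, q2) | q1 q2. \<not> (\<exists>a b. (q1, q2, a, b) \<in> maj_rules)}"

fun maj_out :: "st \<Rightarrow> bool" where
  "maj_out N = False" | "maj_out Y = True" | "maj_out (In Sig) = True" | "maj_out (In Sig') = False"

definition maj_protocol :: "(st, sym) protocol" where
  "maj_protocol = \<lparr>inp = In, out = maj_out, trans = maj_trans\<rparr>"

text \<open>Payoff matrix, rows = player, columns = opponent, order N, Y, sigma, sigma'.\<close>
fun st_idx :: "st \<Rightarrow> nat" where
  "st_idx N = 0" | "st_idx Y = 1" | "st_idx (In Sig) = 2" | "st_idx (In Sig') = 3"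

definition maj_matrix :: "st \<Rightarrow> st \<Rightarrow> real" where
  "maj_matrix q r = [[1, -1, -1, 1], [0, 1, 1, -1], [0, 0, 0, -1], [0, 0, -1, 0]] ! st_idx q ! st_idx r"

end

theory Submission
  imports Defs
begin

lemma all_st: "(\<forall>z. P z) \<longleftrightarrow> P N \<and> P Y \<and> P (In Sig) \<and> P (In Sig')"
  by (metis st.exhaust sym.exhaust)
lemma st4: "x = N \<or> x = Y \<or> x = In Sig \<or> x = In Sig'"
  by (metis st.exhaust sym.exhaust)

lemma mm: "maj_matrix N N = 1" "maj_matrix N Y = -1" "maj_matrix N (In Sig) = -1" "maj_matrix N (In Sig') = 1"
 "maj_matrix Y N = 0" "maj_matrix Y Y = 1" "maj_matrix Y (In Sig) = 1" "maj_matrix Y (In Sig') = -1"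
 "maj_matrix (In Sig) N = 0" "maj_matrix (In Sig) Y = 0" "maj_matrix (In Sig) (In Sig) = 0" "maj_matrix (In Sig) (In Sig') = -1"
 "maj_matrix (In Sig') N = 0" "maj_matrix (In Sig') Y = 0" "maj_matrix (In Sig') (In Sig) = -1" "maj_matrix (In Sig') (In Sig') = 0"
  by (simp_all add: maj_matrix_def)

lemma game_eq: "maj_trans = game_trans maj_matrix"
proof -
  have "(a,b,c,d) \<in> maj_trans \<longleftrightarrow> (a,b,c,d) \<in> game_trans maj_matrix" for a b c d
    using st4[of a] st4[of b] st4[of c] st4[of d]
    by (elim disjE) (simp_all add: maj_trans_def maj_rules_def game_trans_def BR_neq_def mm all_st)
  then show ?thesis by auto
qed

definition minv :: "sym multiset \<Rightarrow> st multiset \<Rightarrow> bool" where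
  "minv x C \<longleftrightarrow> int (count C (In Sig)) - int (count C (In Sig')) = int (count x Sig) - int (count x Sig') \<and>
     (count C (In Sig') = 0 \<longrightarrow> 0 < count C Y + count C (In Sig))"

lemma step_E:
  assumes "step maj_protocol C C'"
  obtains q1 q2 q1' q2' where "(q1,q2,q1',q2') \<in> maj_rules" "{#q1, q2#} \<subseteq># C"
     "C' = C - {#q1, q2#} + {#q1', q2'#}"
  | "C' = C"
proof -
  from assms obtain q1 q2 q1' q2' where t: "(q1,q2,q1',q2') \<in> maj_trans" and s: "{#q1, q2#} \<subseteq># C"
     and e: "C' = C - {#q1, q2#} + {#q1', q2'#}"
    unfolding step_def maj_protocol_def by auto
  show ?thesis
  proof (cases "(q1,q2,q1',q2') \<in> maj_rules")
    case True then show ?thesis using that s e by blast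
  next
    case False
    then have "q1' = q1 \<and> q2' = q2" using t unfolding maj_trans_def by auto
    then have "C' = C" using e s by (metis subset_mset.diff_add)
    then show ?thesis using that by blast
  qed
qed

lemma sub_le: "A \<subseteq># C \<Longrightarrow> count A q \<le> count C q"
  by (simp add: mset_subset_eq_count)

lemma rule_diff: "(q1,q2,q1',q2') \<in> maj_rules \<Longrightarrow>
  int (count {#q1,q2#} (In Sig)) - int (count {#q1,q2#} (In Sig')) =
  int (count {#q1',q2'#} (In Sig)) - int (count {#q1',q2'#} (In Sig'))"
  unfolding maj_rules_def by auto

lemma rule_2: "(q1,q2,q1',q2') \<in> maj_rules \<Longrightarrow>
  count {#q1',q2'#} (In Sig') > 0 \<or> count {#q1',q2'#} Y > 0 \<or>
  (count {#q1,q2#} Y + count {#q1,q2#} (In Sig) \<le> count {#q1',q2'#} Y + count {#q1',q2'#} (In Sig) \<and>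
   count {#q1,q2#} (In Sig') = count {#q1',q2'#} (In Sig'))"
  unfolding maj_rules_def by auto

lemma inv_step:
  assumes "minv x C" "step maj_protocol C C'"
  shows "minv x C'"
  using assms(2)
proof (cases rule: step_E)
  case (1 q1 q2 q1' q2')
  have c: "count C' q = count C q - count {#q1, q2#} q + count {#q1', q2'#} q" for q
    using 1 by simp
  have l: "count {#q1, q2#} q \<le> count C q" for q by (rule sub_le[OF 1(2)])
  note d = rule_diff[OF 1(1)] and r2 = rule_2[OF 1(1)]
  define a where "a = count C (In Sig)"
  define b where "b = count C (In Sig')"
  define y where "y = count C Y"
  define a' where "a' = count C' (In Sig)"
  define b' where "b' = count C' (In Sig')"
  define y' where "y' = count C' Y"
  define ra where "ra = count {#q1, q2#} (In Sig)"
  define rb where "rb = count {#q1, q2#} (In Sig')"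
  define ry where "ry = count {#q1, q2#} Y"
  define sa where "sa = count {#q1', q2'#} (In Sig)"
  define sb where "sb = count {#q1', q2'#} (In Sig')"
  define sy where "sy = count {#q1', q2'#} Y"
  have e: "a' = a - ra + sa" "b' = b - rb + sb" "y' = y - ry + sy"
    unfolding a_def a'_def ra_def sa_def b_def b'_def rb_def sb_def y_def y'_def ry_def sy_def using c by blast+
  have le: "ra \<le> a" "rb \<le> b" "ry \<le> y"
    unfolding a_def ra_def b_def rb_def y_def ry_def using l by blast+
  have d': "int ra - int rb = int sa - int sb" using d unfolding ra_def rb_def sa_def sb_def .
  have r2': "sb > 0 \<or> sy > 0 \<or> (ry + ra \<le> sy + sa \<and> rb = sb)"
    using r2 unfolding ra_def rb_def sa_def sb_def ry_def sy_def .
  have i: "int a - int b = int (count x Sig) - int (count x Sig')" "b = 0 \<longrightarrow> 0 < y + a"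
    using assms(1) unfolding minv_def a_def b_def y_def by auto
  have "int a' - int b' = int (count x Sig) - int (count x Sig')"
    using e le d' i(1) by linarith
  moreover have "b' = 0 \<longrightarrow> 0 < y' + a'"
    using e le r2' i(2) by linarith
  ultimately show ?thesis unfolding minv_def a'_def b'_def y'_def by blast
next
  case 2 then show ?thesis using assms by simp
qed

lemma sub2: "q1 \<noteq> q2 \<Longrightarrow> q1 \<in># C \<Longrightarrow> q2 \<in># C \<Longrightarrow> {#q1, q2#} \<subseteq># C"
proof -
  assume a: "q1 \<noteq> q2" "q1 \<in># C" "q2 \<in># C"
  have "count C q1 \<ge> 1" "count C q2 \<ge> 1" using a(2,3)
    by (metis count_greater_zero_iff One_nat_def Suc_leI)+
  then show ?thesis using a(1) unfolding subseteq_mset_def by auto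
qed

lemma cin: "Suc n = count C q \<Longrightarrow> q \<in># C"
  by (metis count_greater_zero_iff zero_less_Suc)

lemma fire: "(q1,q2,q1',q2') \<in> maj_rules \<Longrightarrow> {#q1,q2#} \<subseteq># C \<Longrightarrow>
   step maj_protocol C (C - {#q1,q2#} + {#q1',q2'#})"
  unfolding step_def maj_protocol_def maj_trans_def
  by (rule exI[of _ q1], rule exI[of _ q2], rule exI[of _ q1'], rule exI[of _ q2']) simp

abbreviation reach where "reach \<equiv> (step maj_protocol)\<^sup>*\<^sup>*"

lemma minv_reach: "reach C D \<Longrightarrow> minv x C \<Longrightarrow> minv x D"
  by (induction rule: rtranclp_induct) (auto intro: inv_step)

definition sinkY where "sinkY C \<longleftrightarrow> count C N = 0 \<and> count C (In Sig') = 0"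
definition sinkN where "sinkN C \<longleftrightarrow> count C Y = 0 \<and> count C (In Sig) = 0"

lemma sink_step:
  assumes "sinkY C \<or> sinkN C" "step maj_protocol C C'"
  shows "C' = C"
  using assms(2)
proof (cases rule: step_E)
  case (1 q1 q2 q1' q2')
  have "q1 \<in># {#q1, q2#}" "q2 \<in># {#q1, q2#}" by simp_all
  then have "q1 \<in># C" "q2 \<in># C" using 1(2) by (meson mset_subset_eqD)+
  then show ?thesis using 1(1) assms(1) unfolding maj_rules_def sinkY_def sinkN_def by (auto simp: not_in_iff[symmetric])
qed simp

lemma phase1Y:
  "minv x C \<Longrightarrow> count x Sig' \<le> count x Sig \<Longrightarrow> \<exists>D. reach C D \<and> minv x D \<and> count D (In Sig') = 0"
proof (induction "count C (In Sig')" arbitrary: C)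
  case 0 then show ?case by auto
next
  case (Suc n)
  then have a: "count C (In Sig) > 0" unfolding minv_def by linarith
  have s: "{#In Sig, In Sig'#} \<subseteq># C" using Suc(2) a by (intro sub2) (auto intro: cin)
  define C' where "C' = C - {#In Sig, In Sig'#} + {#N, Y#}"
  have st: "step maj_protocol C C'" unfolding C'_def by (rule fire[OF _ s]) (simp add: maj_rules_def)
  have "minv x C'" using st Suc(3) by (rule inv_step[rotated])
  moreover have "n = count C' (In Sig')" using Suc(2) unfolding C'_def by simp
  ultimately obtain D where "reach C' D \<and> minv x D \<and> count D (In Sig') = 0"
    using Suc(1) Suc(4) by blast
  then show ?case using st by (meson converse_rtranclp_into_rtranclp)
qed

lemma phase2Y:
  "minv x C \<Longrightarrow> count C (In Sig') = 0 \<Longrightarrow> \<exists>D. reach C D \<and> sinkY D"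
proof (induction "count C N" arbitrary: C)
  case 0 then show ?case by (auto simp: sinkY_def)
next
  case (Suc n)
  then have p: "count C Y > 0 \<or> count C (In Sig) > 0" unfolding minv_def by auto
  then obtain p where pp: "p = Y \<or> p = In Sig" "p \<in># C" by auto
  have s: "{#N, p#} \<subseteq># C" using Suc(2) pp by (intro sub2) (auto intro: cin)
  define C' where "C' = C - {#N, p#} + {#Y, p#}"
  have st: "step maj_protocol C C'" unfolding C'_def using pp(1) by (intro fire[OF _ s]) (auto simp add: maj_rules_def)
  have "minv x C'" using st Suc(3) by (rule inv_step[rotated])
  moreover have "n = count C' N" using Suc(2) pp(1) unfolding C'_def by auto
  moreover have "count C' (In Sig') = 0" using Suc(4) pp(1) unfolding C'_def by auto
  ultimately obtain D where "reach C' D \<and> sinkY D"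
    using Suc(1) by blast
  then show ?case using st by (meson converse_rtranclp_into_rtranclp)
qed

lemma phase1N:
  "minv x C \<Longrightarrow> count x Sig < count x Sig' \<Longrightarrow> \<exists>D. reach C D \<and> minv x D \<and> count D (In Sig) = 0"
proof (induction "count C (In Sig)" arbitrary: C)
  case 0 then show ?case by auto
next
  case (Suc n)
  then have a: "count C (In Sig') > 0" unfolding minv_def by linarith
  have s: "{#In Sig, In Sig'#} \<subseteq># C" using Suc(2) a by (intro sub2) (auto intro: cin)
  define C' where "C' = C - {#In Sig, In Sig'#} + {#N, Y#}"
  have st: "step maj_protocol C C'" unfolding C'_def by (rule fire[OF _ s]) (simp add: maj_rules_def)
  have "minv x C'" using st Suc(3) by (rule inv_step[rotated])
  moreover have "n = count C' (In Sig)" using Suc(2) unfolding C'_def by simp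
  ultimately obtain D where "reach C' D \<and> minv x D \<and> count D (In Sig) = 0"
    using Suc(1) Suc(4) by blast
  then show ?case using st by (meson converse_rtranclp_into_rtranclp)
qed

lemma phase2N:
  "minv x C \<Longrightarrow> count x Sig < count x Sig' \<Longrightarrow> count C (In Sig) = 0 \<Longrightarrow> \<exists>D. reach C D \<and> sinkN D"
proof (induction "count C Y" arbitrary: C)
  case 0 then show ?case by (auto simp: sinkN_def)
next
  case (Suc n)
  then have a: "count C (In Sig') > 0" unfolding minv_def by linarith
  have s: "{#Y, In Sig'#} \<subseteq># C" using Suc(2) a by (intro sub2) (auto intro: cin)
  define C' where "C' = C - {#Y, In Sig'#} + {#N, In Sig'#}"
  have st: "step maj_protocol C C'" unfolding C'_def by (rule fire[OF _ s]) (simp add: maj_rules_def)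
  have "minv x C'" using st Suc(3) by (rule inv_step[rotated])
  moreover have "n = count C' Y" using Suc(2) unfolding C'_def by simp
  moreover have "count C' (In Sig) = 0" using Suc(5) unfolding C'_def by simp
  ultimately obtain D where "reach C' D \<and> sinkN D"
    using Suc(1) Suc(4) by blast
  then show ?case using st by (meson converse_rtranclp_into_rtranclp)
qed

lemma to_sink:
  assumes "minv x C"
  shows "\<exists>D. reach C D \<and> (if count x Sig' \<le> count x Sig then sinkY D else sinkN D)"
proof (cases "count x Sig' \<le> count x Sig")
  case True
  obtain D1 where "reach C D1" "minv x D1" "count D1 (In Sig') = 0" using phase1Y[OF assms True] by blast
  moreover obtain D where "reach D1 D" "sinkY D" using phase2Y calculation(2,3) by blast
  ultimately show ?thesis using True by (meson rtranclp_trans)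
next
  case False
  then have F: "count x Sig < count x Sig'" by simp
  obtain D1 where "reach C D1" "minv x D1" "count D1 (In Sig) = 0" using phase1N[OF assms F] by blast
  moreover obtain D where "reach D1 D" "sinkN D" using phase2N F calculation(2,3) by blast
  ultimately show ?thesis using False by (meson rtranclp_trans)
qed


lemma fair_reach:
  assumes "fair maj_protocol E" "reach C D" "\<exists>\<^sub>\<infinity>i. E i = C"
  shows "\<exists>\<^sub>\<infinity>i. E i = D"
  using assms(2,3)
proof (induction rule: rtranclp_induct)
  case base then show ?case .
next
  case (step y z) then show ?case using assms(1) unfolding fair_def by blast
qed

lemma minv_init:
  assumes "size x \<ge> 2"
  shows "minv x (image_mset In x)"
proof -
  have inj: "inj In" by (simp add: inj_def)
  have c: "count (image_mset In x) (In s) = count x s" for s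
    by (induction x) auto
  have cy: "count (image_mset In x) Y = 0" by (auto simp: not_in_iff[symmetric])
  have "count x Sig' = 0 \<Longrightarrow> 0 < count x Sig"
  proof (rule ccontr)
    assume a: "count x Sig' = 0" "\<not> 0 < count x Sig"
    have "x = {#}"
    proof (rule multiset_eqI)
      fix s show "count x s = count {#} s" using a by (cases s) (auto simp: not_in_iff)
    qed
    then show False using assms by simp
  qed
  then show ?thesis unfolding minv_def c cy by auto
qed

lemma size_step: "step maj_protocol C C' \<Longrightarrow> size C' = size C"
proof -
  assume "step maj_protocol C C'"
  then obtain q1 q2 q1' q2' where s: "{#q1, q2#} \<subseteq># C" and e: "C' = C - {#q1, q2#} + {#q1', q2'#}"
    unfolding step_def by blast
  have "size {#q1, q2#} \<le> size C" using s by (rule size_mset_mono)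
  then show ?thesis using e size_Diff_submset[OF s] by simp
qed

lemma UNIV_st: "(UNIV :: st set) = {N, Y, In Sig, In Sig'}"
  using all_st[of "\<lambda>z. z \<in> {N, Y, In Sig, In Sig'}"] by auto

lemma finite_st: "finite (UNIV :: st set)"
  by (simp add: UNIV_st)

lemma computes_maj: "computes maj_protocol (\<lambda>x. count x Sig \<ge> count x Sig')"
  unfolding computes_def
proof (intro allI impI)
  fix x E
  assume sz: "size x \<ge> 2" and ex: "execution maj_protocol x E" and fa: "fair maj_protocol E"
  have E0: "E 0 = image_mset In x" and st: "\<And>i. step maj_protocol (E i) (E (Suc i))"
    using ex unfolding execution_def initial_config_def maj_protocol_def by auto
  have inv: "minv x (E i)" for i
    by (induction i) (auto simp: E0 minv_init[OF sz] intro: inv_step[OF _ st])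
  have siz: "size (E i) = size x" for i
    by (induction i) (auto simp: E0 size_step[OF st])
  have "range E \<subseteq> multisets_of_size UNIV (size x)"
    using siz by (auto simp: multisets_of_size_def)
  then have fin: "finite (range E)"
    using finite_multisets_of_size[OF finite_st] finite_subset by blast
  obtain C where "C \<in> range E" "infinite (E -` {C})"
    using inf_img_fin_domE[OF fin] by blast
  then have infC: "\<exists>\<^sub>\<infinity>i. E i = C" and "\<exists>i. E i = C"
    unfolding frequently_cofinite by (auto simp: vimage_def)
  then have invC: "minv x C" using inv by auto
  obtain D where rD: "reach C D" and sD: "if count x Sig' \<le> count x Sig then sinkY D else sinkN D"
    using to_sink[OF invC] by blast
  have sk: "sinkY D \<or> sinkN D" using sD by (auto split: if_splits)
  have "\<exists>\<^sub>\<infinity>i. E i = D" using fair_reach[OF fa rD infC] .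
  then obtain T where T: "E T = D" using frequently_ex by blast
  have stay: "E t = D" if "t \<ge> T" for t
    using that
  proof (induction t rule: dec_induct)
    case base then show ?case using T .
  next
    case (step t) then show ?case using sink_step[OF sk] st[of t] by simp
  qed
  have outD: "\<forall>q\<in>#D. maj_out q = (count x Sig' \<le> count x Sig)"
  proof
    fix q assume q: "q \<in># D"
    show "maj_out q = (count x Sig' \<le> count x Sig)"
    proof (cases "count x Sig' \<le> count x Sig")
      case True
      then have "sinkY D" using sD by simp
      then have "q \<noteq> N" "q \<noteq> In Sig'" using q unfolding sinkY_def by (auto simp: not_in_iff[symmetric])
      then show ?thesis using True st4[of q] by auto
    next
      case False
      then have "sinkN D" using sD by simp
      then have "q \<noteq> Y" "q \<noteq> In Sig" using q unfolding sinkN_def by (auto simp: not_in_iff[symmetric])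
      then show ?thesis using False st4[of q] by auto
    qed
  qed
  show "\<exists>T. \<forall>t\<ge>T. \<forall>q\<in>#E t. out maj_protocol q = (count x Sig' \<le> count x Sig)"
    using stay outD by (auto simp: maj_protocol_def)
qed


theorem mainTheorem6:
  shows "pavlovian maj_protocol \<and> trans maj_protocol = game_trans maj_matrix \<and>
    computes maj_protocol (\<lambda>x. count x Sig \<ge> count x Sig')"
  using game_eq computes_maj unfolding pavlovian_def by (auto simp: maj_protocol_def)

end
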